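(* A continuous function $f:[0,1]\to\mathbb{R}$ is of bounded variation if and only if $f=g+h$ for some continuous functions $g,h:[0,1]\to\mathbb{R}$ whose graphs are $1$-monotone.
   Context: A metric space $(X,d)$ is $c$-monotone ($c>0$) if there is a linear order $<$ on $X$ such that $d(x,y)\le c\,d(x,z)$ whenever $x<y<z$ in $X$. The graph of $g$ is $\{(x,g(x)):x\in[0,1]\}\subseteq\mathbb{R}^2$ with the Euclidean metric. *)

theory Defs
  imports "HOL-Analysis.Analysis"
begin

definition c_monotone :: "real \<Rightarrow> 'a::metric_space set \<Rightarrow> bool" where
  "c_monotone c S \<longleftrightarrow> c > 0 \<and> (\<exists>R. linear_order_on S R \<and>
     (\<forall>x\<in>S. \<forall>y\<in>S. \<forall>z\<in>S. (x,y) \<in> R \<and> x \<noteq> y \<and> (y,z) \<in> R \<and> y \<noteq> z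
        \<longrightarrow> dist x y \<le> c * dist x z))"

text \<open>Graph of g over [0,1], as a subset of the Euclidean plane (real \<times> real carries
the Euclidean metric).\<close>
definition graph01 :: "(real \<Rightarrow> real) \<Rightarrow> (real \<times> real) set" where
  "graph01 g = (\<lambda>x. (x, g x)) ` {0..1}"

definition bounded_variation01 :: "(real \<Rightarrow> real) \<Rightarrow> bool" where
  "bounded_variation01 f \<longleftrightarrow> (\<exists>M. \<forall>(n::nat) (t::nat \<Rightarrow> real).
     t 0 = 0 \<and> t n = 1 \<and> (\<forall>i<n. t i \<le> t (Suc i)) \<longrightarrow>
     (\<Sum>i<n. \<bar>f (t (Suc i)) - f (t i)\<bar>) \<le> M)"

end

theory Submission
  imports Defs
begin

lemma key_alg:
  fixes a b dx dy :: real
  assumes "0 \<le> dx" "dx < dy" "0 \<le> a" "(a - dx)^2 + (b - dy)^2 \<le> a^2 + b^2"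
  shows "dy \<le> 2*(a+b)"
proof -
  have h: "dx^2 + dy^2 \<le> 2*(a*dx + b*dy)" using assms(4) by (simp add: power2_eq_square algebra_simps)
  have "a*dx \<le> a*dy" using assms by (intro mult_left_mono) auto
  hence "dy^2 \<le> 2*(dy*(a+b))" using h by (smt (verit) distrib_left mult.commute zero_le_power2)
  hence "dy * dy \<le> dy * (2*(a+b))" by (simp add: power2_eq_square algebra_simps)
  thus ?thesis using assms by (smt (verit) mult_le_cancel_left)
qed

lemma mono_steps:
  fixes x :: "nat \<Rightarrow> real"
  assumes "\<forall>i<n. x i \<le> x (Suc i)" "k \<le> i" "i \<le> n"
  shows "x k \<le> x i"
  using assms(2,3)
proof (induction i)
  case 0 thus ?case by simp
next
  case (Suc i)
  show ?case
  proof (cases "k = Suc i")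
    case True thus ?thesis by simp
  next
    case False
    hence "x k \<le> x i" using Suc by simp
    also have "x i \<le> x (Suc i)" using assms(1) Suc by simp
    finally show ?thesis .
  qed
qed


lemma seq_bound:
  fixes x y :: "nat \<Rightarrow> real"
  assumes mono: "\<forall>i<n. x i \<le> x (Suc i)"
  and cond: "\<forall>k i. k \<le> i \<longrightarrow> i < n \<longrightarrow>
     (x i - x k)^2 + (y i - y k)^2 \<le> (x (Suc i) - x k)^2 + (y (Suc i) - y k)^2"
  and bnd: "\<forall>i\<le>n. \<bar>y i\<bar> \<le> B"
  shows "(\<Sum>i<n. \<bar>y (Suc i) - y i\<bar>) \<le> 5 * (x n - x 0) + 8 * B"
proof -
  define Hp where "Hp i = Max ((\<lambda>k. x k + y k) ` {..i})" for i
  define Hm where "Hm i = Max ((\<lambda>k. x k - y k) ` {..i})" for i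
  have Hp_ge: "x k + y k \<le> Hp i" if "k \<le> i" for k i
    unfolding Hp_def using that by (intro Max_ge) auto
  have Hm_ge: "x k - y k \<le> Hm i" if "k \<le> i" for k i
    unfolding Hm_def using that by (intro Max_ge) auto
  have Hp_in: "\<exists>k\<le>i. Hp i = x k + y k" for i
  proof -
    have "Hp i \<in> (\<lambda>k. x k + y k) ` {..i}" unfolding Hp_def by (intro Max_in) auto
    thus ?thesis by auto
  qed
  have Hm_in: "\<exists>k\<le>i. Hm i = x k - y k" for i
  proof -
    have "Hm i \<in> (\<lambda>k. x k - y k) ` {..i}" unfolding Hm_def by (intro Max_in) auto
    thus ?thesis by auto
  qed
  have Hp_mono: "Hp i \<le> Hp (Suc i)" for i
    using Hp_in[of i] Hp_ge by fastforce
  have Hm_mono: "Hm i \<le> Hm (Suc i)" for i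
    using Hm_in[of i] Hm_ge by fastforce
  have step: "\<bar>y (Suc i) - y i\<bar> \<le> (x (Suc i) - x i) + 2 * (Hp (Suc i) - Hp i) + 2 * (Hm (Suc i) - Hm i)"
    if i: "i < n" for i
  proof -
    have dx: "0 \<le> x (Suc i) - x i" using mono i by auto
    consider "\<bar>y (Suc i) - y i\<bar> \<le> x (Suc i) - x i" | "x (Suc i) - x i < y (Suc i) - y i"
      | "x (Suc i) - x i < y i - y (Suc i)" by linarith
    thus ?thesis
    proof cases
      case 1 thus ?thesis using Hp_mono[of i] Hm_mono[of i] by smt
    next
      case 2
      obtain k where k: "k \<le> i" "Hp i = x k + y k" using Hp_in by blast
      have a: "0 \<le> x (Suc i) - x k" using mono_steps[OF mono, of k "Suc i"] k i by auto
      have c: "(x i - x k)^2 + (y i - y k)^2 \<le> (x (Suc i) - x k)^2 + (y (Suc i) - y k)^2"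
        using cond k i by auto
      have "y (Suc i) - y i \<le> 2 * ((x (Suc i) - x k) + (y (Suc i) - y k))"
        apply (rule key_alg[OF dx 2 a])
        using c by (simp add: algebra_simps)
      moreover have "x (Suc i) + y (Suc i) \<le> Hp (Suc i)" using Hp_ge by auto
      ultimately show ?thesis using k 2 dx Hm_mono[of i] by smt
    next
      case 3
      obtain k where k: "k \<le> i" "Hm i = x k - y k" using Hm_in by blast
      have a: "0 \<le> x (Suc i) - x k" using mono_steps[OF mono, of k "Suc i"] k i by auto
      have c: "(x i - x k)^2 + (y i - y k)^2 \<le> (x (Suc i) - x k)^2 + (y (Suc i) - y k)^2"
        using cond k i by auto
      have "y i - y (Suc i) \<le> 2 * ((x (Suc i) - x k) + (y k - y (Suc i)))"
        apply (rule key_alg[OF dx 3 a])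
        using c by (simp add: algebra_simps power2_commute)
      moreover have "x (Suc i) - y (Suc i) \<le> Hm (Suc i)" using Hm_ge by auto
      ultimately show ?thesis using k 3 dx Hp_mono[of i] by smt
    qed
  qed
  have "(\<Sum>i<n. \<bar>y (Suc i) - y i\<bar>) \<le> (\<Sum>i<n. (x (Suc i) - x i) + 2 * (Hp (Suc i) - Hp i) + 2 * (Hm (Suc i) - Hm i))"
    using step by (intro sum_mono) auto
  also have "\<dots> = (x n - x 0) + 2 * (Hp n - Hp 0) + 2 * (Hm n - Hm 0)"
  proof -
    have t1: "(\<Sum>i<n. 2 * Hp (Suc i) - 2 * Hp i) = 2 * Hp n - 2 * Hp 0"
      by (rule sum_lessThan_telescope)
    have t2: "(\<Sum>i<n. 2 * Hm (Suc i) - 2 * Hm i) = 2 * Hm n - 2 * Hm 0"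
      by (rule sum_lessThan_telescope)
    have "(\<Sum>i<n. (x (Suc i) - x i) + 2 * (Hp (Suc i) - Hp i) + 2 * (Hm (Suc i) - Hm i))
       = (\<Sum>i<n. (\<lambda>i. x i + 2 * Hp i + 2 * Hm i) (Suc i) - (\<lambda>i. x i + 2 * Hp i + 2 * Hm i) i)"
      by (intro sum.cong) (auto simp: algebra_simps)
    also have "\<dots> = (x n - x 0) + 2 * (Hp n - Hp 0) + 2 * (Hm n - Hm 0)"
      by (subst sum_lessThan_telescope) (simp add: algebra_simps)
    finally show ?thesis .
  qed
  also have "\<dots> \<le> 5 * (x n - x 0) + 8 * B"
  proof -
    obtain k where k: "k \<le> n" "Hp n = x k + y k" using Hp_in by blast
    obtain j where j: "j \<le> n" "Hm n = x j - y j" using Hm_in by blast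
    have "Hp 0 = x 0 + y 0" "Hm 0 = x 0 - y 0" using Hp_in[of 0] Hm_in[of 0] by auto
    moreover have "x k \<le> x n" "x j \<le> x n" using mono_steps[OF mono] k j by auto
    moreover have "\<bar>y k\<bar> \<le> B" "\<bar>y j\<bar> \<le> B" "\<bar>y 0\<bar> \<le> B" using bnd k j by auto
    ultimately show ?thesis using k j unfolding abs_le_iff by (simp add: algebra_simps)
  qed
  finally show ?thesis .
qed

lemma orient:
  fixes g :: "real \<Rightarrow> real" and P :: "real \<Rightarrow> real \<Rightarrow> bool"
  assumes cont: "continuous_on {0..1} g"
  and tot: "\<And>s t. s \<in> {0..1} \<Longrightarrow> t \<in> {0..1} \<Longrightarrow> s \<noteq> t \<Longrightarrow> P s t \<longleftrightarrow> \<not> P t s"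
  and mon: "\<And>r s u. r \<in> {0..1} \<Longrightarrow> s \<in> {0..1} \<Longrightarrow> u \<in> {0..1} \<Longrightarrow> P r s \<Longrightarrow> r \<noteq> s
      \<Longrightarrow> P s u \<Longrightarrow> s \<noteq> u \<Longrightarrow> dist (r, g r) (s, g s) \<le> dist (r, g r) (u, g u)"
  shows "(\<forall>s t. 0 \<le> s \<longrightarrow> s < t \<longrightarrow> t \<le> 1 \<longrightarrow> P s t) \<or> (\<forall>s t. 0 \<le> s \<longrightarrow> s < t \<longrightarrow> t \<le> 1 \<longrightarrow> P t s)"
proof -
  define G where "G x = (x, g x)" for x
  have Gc: "continuous_on {0..1} G" unfolding G_def by (intro continuous_intros cont)
  have Gd: "\<forall>x\<in>{0..1}. \<forall>e>0. \<exists>d>0. \<forall>x'\<in>{0..1}. dist x' x < d \<longrightarrow> dist (G x') (G x) < e"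
    using Gc continuous_on_iff by blast
  have Gpos: "dist (G s) (G t) > 0" if "s \<noteq> t" for s t
    using that unfolding G_def by simp
  have mon': "dist (G r) (G s) \<le> dist (G r) (G u)" if "r \<in> {0..1}" "s \<in> {0..1}" "u \<in> {0..1}"
    "P r s" "r \<noteq> s" "P s u" "s \<noteq> u" for r s u
    using mon[OF that] unfolding G_def .
  have sep1: "\<exists>d>0. \<forall>u\<in>{0..1}. dist u s < d \<longrightarrow> u \<noteq> t \<longrightarrow> P u t"
    if st: "s \<in> {0..1}" "t \<in> {0..1}" "s \<noteq> t" "P s t" for s t
  proof -
    obtain d where d: "d > 0" "\<forall>x'\<in>{0..1}. dist x' s < d \<longrightarrow> dist (G x') (G s) < dist (G s) (G t)"
      using Gd st Gpos[OF st(3)] by blast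
    show ?thesis
    proof (intro exI[of _ d] conjI ballI impI)
      fix u assume u: "u \<in> {0..1}" "dist u s < d" "u \<noteq> t"
      show "P u t"
      proof (rule ccontr)
        assume "\<not> P u t"
        hence "P t u" using tot[of u t] u st by auto
        hence "dist (G s) (G t) \<le> dist (G s) (G u)" using mon'[of s t u] st u by auto
        moreover have "dist (G u) (G s) < dist (G s) (G t)" using d u by auto
        ultimately show False by (simp add: dist_commute)
      qed
    qed (use d in auto)
  qed
  have sep2: "\<exists>d>0. \<forall>s\<in>{0..1}. dist s u < d \<longrightarrow> s \<noteq> t \<longrightarrow> P t s"
    if tu: "u \<in> {0..1}" "t \<in> {0..1}" "u \<noteq> t" "P t u" for t u
  proof -
    have e: "dist (G u) (G t) / 2 > 0" using Gpos[of u t] tu by auto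
    obtain d where d: "d > 0" "\<forall>x'\<in>{0..1}. dist x' u < d \<longrightarrow> dist (G x') (G u) < dist (G u) (G t) / 2"
      using Gd tu e by blast
    show ?thesis
    proof (intro exI[of _ d] conjI ballI impI)
      fix s assume s: "s \<in> {0..1}" "dist s u < d" "s \<noteq> t"
      show "P t s"
      proof (rule ccontr)
        assume "\<not> P t s"
        hence "P s t" using tot[of s t] s tu by auto
        hence "dist (G s) (G t) \<le> dist (G s) (G u)" using mon'[of s t u] s tu by auto
        moreover have "dist (G s) (G u) < dist (G u) (G t) / 2" using d s by auto
        moreover have "dist (G u) (G t) \<le> dist (G u) (G s) + dist (G s) (G t)" by (rule dist_triangle)
        ultimately show False by (simp add: dist_commute)
      qed
    qed (use d in auto)
  qed
  have clop: "(\<forall>s\<in>I. P s t) \<or> (\<forall>s\<in>I. P t s)"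
    if t: "t \<in> {0..1}" and I: "I \<subseteq> {0..1} - {t}" "connected I" for t I
  proof -
    define T where "T = {s\<in>I. P s t}"
    have op: "openin (top_of_set I) T"
      unfolding openin_euclidean_subtopology_iff
    proof (intro conjI ballI)
      show "T \<subseteq> I" unfolding T_def by auto
      fix s assume s: "s \<in> T"
      hence s1: "s \<in> {0..1}" "s \<noteq> t" "P s t" using I unfolding T_def by auto
      obtain d where d: "d > 0" "\<forall>u\<in>{0..1}. dist u s < d \<longrightarrow> u \<noteq> t \<longrightarrow> P u t"
        using sep1[OF s1(1) t s1(2,3)] by blast
      show "\<exists>e>0. \<forall>x'\<in>I. dist x' s < e \<longrightarrow> x' \<in> T"
        using d I unfolding T_def by (intro exI[of _ d]) auto
    qed
    have op2: "openin (top_of_set I) (I - T)"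
      unfolding openin_euclidean_subtopology_iff
    proof (intro conjI ballI)
      show "I - T \<subseteq> I" by auto
      fix u assume u: "u \<in> I - T"
      have u0: "u \<in> {0..1}" "u \<noteq> t" using u I by auto
      have u1: "u \<in> {0..1}" "u \<noteq> t" "P t u" using u0 tot[OF u0(1) t u0(2)] u unfolding T_def by auto
      obtain d where d: "d > 0" "\<forall>s\<in>{0..1}. dist s u < d \<longrightarrow> s \<noteq> t \<longrightarrow> P t s"
        using sep2[OF u1(1) t u1(2,3)] by blast
      show "\<exists>e>0. \<forall>x'\<in>I. dist x' u < e \<longrightarrow> x' \<in> I - T"
      proof (intro exI[of _ d] conjI ballI impI)
        fix x' assume x': "x' \<in> I" "dist x' u < d"
        have x0: "x' \<in> {0..1}" "x' \<noteq> t" using x' I by auto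
        have "P t x'" using d x' x0 by auto
        hence "\<not> P x' t" using tot[OF x0(1) t x0(2)] by auto
        thus "x' \<in> I - T" using x' unfolding T_def by auto
      qed (use d in auto)
    qed
    have cl: "closedin (top_of_set I) T"
      unfolding closedin_def using op2 unfolding T_def by auto
    have "T = {} \<or> T = I" using I(2) op cl unfolding connected_clopen by blast
    thus ?thesis
    proof
      assume "T = {}"
      hence "\<forall>s\<in>I. \<not> P s t" unfolding T_def by auto
      thus ?thesis using tot t I by blast
    next
      assume "T = I" thus ?thesis unfolding T_def by auto
    qed
  qed
  have c0: "(\<forall>s\<in>{0<..1}. P s 0) \<or> (\<forall>s\<in>{0<..1}. P 0 s)"
    by (rule clop) auto
  have cL: "(\<forall>s\<in>{0..<t}. P s t) \<or> (\<forall>s\<in>{0..<t}. P t s)" if "0 < t" "t \<le> 1" for t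
    using that by (intro clop) auto
  show ?thesis
  proof (cases "P 0 1")
    case True
    hence "\<not> P 1 0" using tot[of 0 1] by auto
    hence A: "\<forall>s\<in>{0<..1}. P 0 s" using c0 by auto
    have "P s t" if "0 \<le> s" "s < t" "t \<le> 1" for s t
    proof -
      have "P 0 t" using A that by auto
      hence "\<not> P t 0" using tot[of 0 t] that by auto
      thus ?thesis using cL[of t] that by auto
    qed
    thus ?thesis by blast
  next
    case False
    hence "P 1 0" using tot[of 0 1] by auto
    have A: "\<forall>s\<in>{0<..1}. P s 0" using c0 False by fastforce
    have "P t s" if "0 \<le> s" "s < t" "t \<le> 1" for s t
    proof -
      have "P t 0" using A that by auto
      hence "\<not> P 0 t" using tot[of 0 t] that by auto
      thus ?thesis using cL[of t] that by auto
    qed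
    thus ?thesis by blast
  qed
qed

lemma dist_sq_graph:
  fixes g :: "real \<Rightarrow> real"
  assumes "dist (a, g a) (b, g b) \<le> dist (a, g a) (c, g c)"
  shows "(b - a)^2 + (g b - g a)^2 \<le> (c - a)^2 + (g c - g a)^2"
proof -
  have "sqrt ((b - a)^2 + (g b - g a)^2) \<le> sqrt ((c - a)^2 + (g c - g a)^2)"
    using assms by (simp add: dist_Pair_Pair dist_real_def power2_commute)
  thus ?thesis by simp
qed

lemma cont_bounded01:
  fixes g :: "real \<Rightarrow> real"
  assumes "continuous_on {0..1} g"
  obtains B where "\<forall>x\<in>{0..1}. \<bar>g x\<bar> \<le> B"
proof -
  have "bounded (g ` {0..1})"
    by (rule compact_imp_bounded[OF compact_continuous_image[OF assms compact_Icc]])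
  then obtain B where "\<forall>y\<in>g ` {0..1}. norm y \<le> B" unfolding bounded_iff by blast
  thus ?thesis using that by auto
qed

lemma part_range:
  fixes t :: "nat \<Rightarrow> real"
  assumes "t 0 = 0" "t n = 1" "\<forall>i<n. t i \<le> t (Suc i)" "i \<le> n"
  shows "t i \<in> {0..1}"
  using mono_steps[OF assms(3), of 0 i] mono_steps[OF assms(3), of i n] assms by auto

lemma graph_bv:
  fixes g :: "real \<Rightarrow> real"
  assumes cont: "continuous_on {0..1} g" and cm: "c_monotone 1 (graph01 g)"
  shows "bounded_variation01 g"
proof -
  obtain R where lo: "linear_order_on (graph01 g) R" and
    pr: "\<forall>x\<in>graph01 g. \<forall>y\<in>graph01 g. \<forall>z\<in>graph01 g. (x,y) \<in> R \<and> x \<noteq> y \<and> (y,z) \<in> R \<and> y \<noteq> z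
        \<longrightarrow> dist x y \<le> 1 * dist x z"
    using cm unfolding c_monotone_def by blast
  define P where "P s t \<longleftrightarrow> ((s, g s), (t, g t)) \<in> R" for s t
  have inG: "(s, g s) \<in> graph01 g" if "s \<in> {0..1}" for s
    using that unfolding graph01_def by auto
  have tot: "P s t \<longleftrightarrow> \<not> P t s" if "s \<in> {0..1}" "t \<in> {0..1}" "s \<noteq> t" for s t
  proof -
    have ne: "(s, g s) \<noteq> (t, g t)" using that by auto
    have "((s, g s), (t, g t)) \<in> R \<or> ((t, g t), (s, g s)) \<in> R"
      using lo inG[OF that(1)] inG[OF that(2)] ne unfolding linear_order_on_def total_on_def by blast
    moreover have "\<not> (((s, g s), (t, g t)) \<in> R \<and> ((t, g t), (s, g s)) \<in> R)"
      using lo ne unfolding linear_order_on_def partial_order_on_def antisym_def by blast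
    ultimately show ?thesis unfolding P_def by blast
  qed
  have mon: "dist (r, g r) (s, g s) \<le> dist (r, g r) (u, g u)"
    if "r \<in> {0..1}" "s \<in> {0..1}" "u \<in> {0..1}" "P r s" "r \<noteq> s" "P s u" "s \<noteq> u" for r s u
    using pr inG[OF that(1)] inG[OF that(2)] inG[OF that(3)] that unfolding P_def by auto
  obtain B where B: "\<forall>x\<in>{0..1}. \<bar>g x\<bar> \<le> B" using cont_bounded01[OF cont] by blast
  have ori: "(\<forall>s t. 0 \<le> s \<longrightarrow> s < t \<longrightarrow> t \<le> 1 \<longrightarrow> P s t) \<or> (\<forall>s t. 0 \<le> s \<longrightarrow> s < t \<longrightarrow> t \<le> 1 \<longrightarrow> P t s)"
    by (rule orient[OF cont tot mon]) auto
  show ?thesis unfolding bounded_variation01_def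
  proof (intro exI[of _ "5 + 8 * B"] allI impI)
    fix n and t :: "nat \<Rightarrow> real"
    assume part: "t 0 = 0 \<and> t n = 1 \<and> (\<forall>i<n. t i \<le> t (Suc i))"
    hence t0: "t 0 = 0" and tn: "t n = 1" and tm: "\<forall>i<n. t i \<le> t (Suc i)" by auto
    have tr: "t i \<in> {0..1}" if "i \<le> n" for i using part_range[OF t0 tn tm that] .
    have tle: "t k \<le> t i" if "k \<le> i" "i \<le> n" for k i using mono_steps[OF tm that] .
    from ori show "(\<Sum>i<n. \<bar>g (t (Suc i)) - g (t i)\<bar>) \<le> 5 + 8 * B"
    proof
      assume fw: "\<forall>s t. 0 \<le> s \<longrightarrow> s < t \<longrightarrow> t \<le> 1 \<longrightarrow> P s t"
      have cond: "\<forall>k i. k \<le> i \<longrightarrow> i < n \<longrightarrow>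
        (t i - t k)^2 + (g (t i) - g (t k))^2 \<le> (t (Suc i) - t k)^2 + (g (t (Suc i)) - g (t k))^2"
      proof (intro allI impI)
        fix k i assume ki: "k \<le> i" "i < n"
        have a: "t k \<le> t i" "t i \<le> t (Suc i)" using tle ki by auto
        have r: "t k \<in> {0..1}" "t i \<in> {0..1}" "t (Suc i) \<in> {0..1}" using tr ki by auto
        show "(t i - t k)^2 + (g (t i) - g (t k))^2 \<le> (t (Suc i) - t k)^2 + (g (t (Suc i)) - g (t k))^2"
        proof (cases "t k = t i \<or> t i = t (Suc i)")
          case True thus ?thesis by auto
        next
          case False
          hence lt: "t k < t i" "t i < t (Suc i)" using a by auto
          have "P (t k) (t i)" "P (t i) (t (Suc i))" using fw lt r by auto
          hence "dist (t k, g (t k)) (t i, g (t i)) \<le> dist (t k, g (t k)) (t (Suc i), g (t (Suc i)))"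
            using mon r lt by auto
          thus ?thesis by (rule dist_sq_graph)
        qed
      qed
      have "(\<Sum>i<n. \<bar>(g \<circ> t) (Suc i) - (g \<circ> t) i\<bar>) \<le> 5 * (t n - t 0) + 8 * B"
        by (rule seq_bound[OF tm]) (use cond B tr in auto)
      thus ?thesis using t0 tn by simp
    next
      assume bw: "\<forall>s t. 0 \<le> s \<longrightarrow> s < t \<longrightarrow> t \<le> 1 \<longrightarrow> P t s"
      define x where "x i = - t (n - i)" for i
      define y where "y i = g (t (n - i))" for i
      have xm: "\<forall>i<n. x i \<le> x (Suc i)"
      proof (intro allI impI)
        fix i assume i: "i < n"
        have "n - i = Suc (n - Suc i)" using i by auto
        thus "x i \<le> x (Suc i)" unfolding x_def using tm i by auto
      qed
      have cond: "\<forall>k i. k \<le> i \<longrightarrow> i < n \<longrightarrow>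
        (x i - x k)^2 + (y i - y k)^2 \<le> (x (Suc i) - x k)^2 + (y (Suc i) - y k)^2"
      proof (intro allI impI)
        fix k i assume ki: "k \<le> i" "i < n"
        define a where "a = t (n - Suc i)"
        define b where "b = t (n - i)"
        define c where "c = t (n - k)"
        have ab: "a \<le> b" unfolding a_def b_def using tle[of "n - Suc i" "n - i"] ki by auto
        have bc: "b \<le> c" unfolding b_def c_def using tle[of "n - i" "n - k"] ki by auto
        have r: "a \<in> {0..1}" "b \<in> {0..1}" "c \<in> {0..1}" unfolding a_def b_def c_def using tr ki by auto
        have "(b - c)^2 + (g b - g c)^2 \<le> (a - c)^2 + (g a - g c)^2"
        proof (cases "b = c \<or> a = b")
          case True thus ?thesis by auto
        next
          case False
          hence lt: "a < b" "b < c" using ab bc by auto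
          have "P c b" "P b a" using bw lt r by auto
          hence "dist (c, g c) (b, g b) \<le> dist (c, g c) (a, g a)"
            using mon r lt by auto
          thus ?thesis by (rule dist_sq_graph)
        qed
        moreover have "x i = - b" "x k = - c" "x (Suc i) = - a" "y i = g b" "y k = g c" "y (Suc i) = g a"
          unfolding x_def y_def a_def b_def c_def by auto
        ultimately show "(x i - x k)^2 + (y i - y k)^2 \<le> (x (Suc i) - x k)^2 + (y (Suc i) - y k)^2"
          by (simp add: power2_commute algebra_simps)
      qed
      have yb: "\<forall>i\<le>n. \<bar>y i\<bar> \<le> B" unfolding y_def using B tr by auto
      have s1: "(\<Sum>i<n. \<bar>y (Suc i) - y i\<bar>) \<le> 5 * (x n - x 0) + 8 * B"
        by (rule seq_bound[OF xm cond yb])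
      have "(\<Sum>i<n. \<bar>g (t (Suc i)) - g (t i)\<bar>) = (\<Sum>i<n. \<bar>g (t (Suc (n - Suc i))) - g (t (n - Suc i))\<bar>)"
        using sum.atLeastLessThan_rev[of "\<lambda>i. \<bar>g (t (Suc i)) - g (t i)\<bar>" 0 n]
        by (simp add: atLeast0LessThan)
      also have "\<dots> = (\<Sum>i<n. \<bar>y (Suc i) - y i\<bar>)"
      proof (intro sum.cong refl)
        fix i assume "i \<in> {..<n}"
        hence "Suc (n - Suc i) = n - i" by auto
        thus "\<bar>g (t (Suc (n - Suc i))) - g (t (n - Suc i))\<bar> = \<bar>y (Suc i) - y i\<bar>"
          unfolding y_def by (simp add: abs_minus_commute)
      qed
      finally show ?thesis using s1 t0 tn unfolding x_def by simp
    qed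
  qed
qed

definition psum :: "(real \<Rightarrow> real) \<Rightarrow> (nat \<Rightarrow> real) \<Rightarrow> nat \<Rightarrow> real" where
  "psum f t n = (\<Sum>i<n. \<bar>f (t (Suc i)) - f (t i)\<bar>)"

definition part :: "real \<Rightarrow> real \<Rightarrow> (nat \<Rightarrow> real) \<Rightarrow> nat \<Rightarrow> bool" where
  "part a b t n \<longleftrightarrow> t 0 = a \<and> t n = b \<and> (\<forall>i<n. t i \<le> t (Suc i))"

definition cat :: "(nat \<Rightarrow> real) \<Rightarrow> nat \<Rightarrow> (nat \<Rightarrow> real) \<Rightarrow> nat \<Rightarrow> real" where
  "cat t n s = (\<lambda>i. if i \<le> n then t i else s (i - n))"

lemma psum_nonneg: "0 \<le> psum f t n"
  unfolding psum_def by (intro sum_nonneg) auto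

lemma cat_part:
  assumes "part a b t n" "part b c s m"
  shows "part a c (cat t n s) (n + m)"
proof -
  have A: "t 0 = a" "t n = b" "\<forall>i<n. t i \<le> t (Suc i)" "s 0 = b" "s m = c" "\<forall>i<m. s i \<le> s (Suc i)"
    using assms unfolding part_def by auto
  have "cat t n s i \<le> cat t n s (Suc i)" if i: "i < n + m" for i
  proof (cases "i < n")
    case True thus ?thesis using A unfolding cat_def by auto
  next
    case False
    hence "Suc i - n = Suc (i - n)" "i - n < m" using i by auto
    moreover have "cat t n s i = s (i - n)" using False A unfolding cat_def by auto
    ultimately show ?thesis using A False unfolding cat_def by auto
  qed
  moreover have "cat t n s (n + m) = c" using A unfolding cat_def by auto
  moreover have "cat t n s 0 = a" using A unfolding cat_def by auto
  ultimately show ?thesis unfolding part_def by auto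
qed

lemma cat_psum:
  assumes "part a b t n" "part b c s m"
  shows "psum f (cat t n s) (n + m) = psum f t n + psum f s m"
proof -
  have "psum f (cat t n s) (n + m) = (\<Sum>i\<in>{0..<n}. \<bar>f (cat t n s (Suc i)) - f (cat t n s i)\<bar>)
      + (\<Sum>i\<in>{n..<n+m}. \<bar>f (cat t n s (Suc i)) - f (cat t n s i)\<bar>)"
    unfolding psum_def by (simp add: atLeast0LessThan[symmetric] sum.atLeastLessThan_concat)
  also have "(\<Sum>i\<in>{0..<n}. \<bar>f (cat t n s (Suc i)) - f (cat t n s i)\<bar>) = psum f t n"
    unfolding psum_def cat_def atLeast0LessThan by (intro sum.cong) auto
  also have "(\<Sum>i\<in>{n..<n+m}. \<bar>f (cat t n s (Suc i)) - f (cat t n s i)\<bar>)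
     = (\<Sum>i\<in>{0..<m}. \<bar>f (cat t n s (Suc (i + n))) - f (cat t n s (i + n))\<bar>)"
    using sum.shift_bounds_nat_ivl[of "\<lambda>i. \<bar>f (cat t n s (Suc i)) - f (cat t n s i)\<bar>" 0 n m]
    by (simp add: add.commute)
  also have "\<dots> = psum f s m"
    unfolding psum_def cat_def atLeast0LessThan
  proof (intro sum.cong refl)
    fix i assume "i \<in> {..<m}"
    have "t n = s 0" using assms unfolding part_def by auto
    thus "\<bar>f (if Suc (i + n) \<le> n then t (Suc (i + n)) else s (Suc (i + n) - n)) -
          f (if i + n \<le> n then t (i + n) else s (i + n - n))\<bar> = \<bar>f (s (Suc i)) - f (s i)\<bar>"
      by (cases i) auto
  qed
  finally show ?thesis .
qed

lemma single_part: "a \<le> b \<Longrightarrow> part a b (\<lambda>i. if i = 0 then a else b) 1"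
  unfolding part_def by auto

lemma single_psum: "psum f (\<lambda>i. if i = 0 then a else b) 1 = \<bar>f b - f a\<bar>"
  unfolding psum_def by simp

lemma part_le: "part a b t n \<Longrightarrow> k \<le> i \<Longrightarrow> i \<le> n \<Longrightarrow> t k \<le> t i"
  unfolding part_def
proof -
  assume h: "t 0 = a \<and> t n = b \<and> (\<forall>i<n. t i \<le> t (Suc i))" "k \<le> i" "i \<le> n"
  show "t k \<le> t i" using h(2,3)
  proof (induction i)
    case 0 thus ?case by simp
  next
    case (Suc i)
    show ?case
    proof (cases "k = Suc i")
      case True thus ?thesis by simp
    next
      case False
      hence "t k \<le> t i" using Suc by simp
      also have "t i \<le> t (Suc i)" using h(1) Suc by simp
      finally show ?thesis .
    qed
  qed
qed

lemma part_ab: "part a b t n \<Longrightarrow> a \<le> b"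
  using part_le[of a b t n 0 n] unfolding part_def by auto

lemma psum_Suc: "psum f t (Suc m) = psum f t m + \<bar>f (t (Suc m)) - f (t m)\<bar>"
  unfolding psum_def by simp

lemma psum_shift: "psum f t (Suc m) = \<bar>f (t 1) - f (t 0)\<bar> + psum f (\<lambda>i. t (Suc i)) m"
  unfolding psum_def by (subst sum.lessThan_Suc_shift) simp

lemma split_part:
  assumes "part a c t n" "a \<le> b" "b \<le> c"
  shows "\<exists>t1 n1 t2 n2. part a b t1 n1 \<and> part b c t2 n2 \<and> psum f t n \<le> psum f t1 n1 + psum f t2 n2"
  using assms
proof (induction n arbitrary: c)
  case 0
  hence "a = c" unfolding part_def by auto
  hence "b = a" "b = c" using 0 by auto
  have "part a b (\<lambda>i. a) 0" "part b c (\<lambda>i. b) 0" using \<open>b = a\<close> \<open>b = c\<close> unfolding part_def by auto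
  moreover have "psum f t 0 \<le> psum f (\<lambda>i. a) 0 + psum f (\<lambda>i. b) 0" unfolding psum_def by simp
  ultimately show ?case by blast
next
  case (Suc m)
  have pm: "part a (t m) t m" using Suc.prems(1) unfolding part_def by auto
  have tmc: "t m \<le> c" using Suc.prems(1) unfolding part_def by auto
  show ?case
  proof (cases "b \<le> t m")
    case True
    obtain t1 n1 t2 n2 where h: "part a b t1 n1" "part b (t m) t2 n2" "psum f t m \<le> psum f t1 n1 + psum f t2 n2"
      using Suc.IH[OF pm Suc.prems(2) True] by blast
    have sp: "part (t m) c (\<lambda>i. if i = 0 then t m else c) 1" by (rule single_part[OF tmc])
    have "part b c (cat t2 n2 (\<lambda>i. if i = 0 then t m else c)) (n2 + 1)" by (rule cat_part[OF h(2) sp])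
    moreover have "psum f t (Suc m) \<le> psum f t1 n1 + psum f (cat t2 n2 (\<lambda>i. if i = 0 then t m else c)) (n2 + 1)"
      using h(3) Suc.prems(1) unfolding cat_psum[OF h(2) sp] single_psum psum_Suc part_def by auto
    ultimately show ?thesis using h(1) by blast
  next
    case False
    have sp: "part (t m) b (\<lambda>i. if i = 0 then t m else b) 1" using False by (intro single_part) auto
    have p1: "part a b (cat t m (\<lambda>i. if i = 0 then t m else b)) (m + 1)" by (rule cat_part[OF pm sp])
    have p2: "part b c (\<lambda>i. if i = 0 then b else c) 1" using Suc.prems by (intro single_part) auto
    have "psum f t (Suc m) \<le> psum f (cat t m (\<lambda>i. if i = 0 then t m else b)) (m + 1) + psum f (\<lambda>i. if i = 0 then b else c) 1"
      using Suc.prems(1) unfolding cat_psum[OF pm sp] single_psum psum_Suc part_def by auto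
    thus ?thesis using p1 p2 by blast
  qed
qed

lemma dedup_last:
  assumes "part a b t n" "a < b"
  shows "\<exists>m. part a b t (Suc m) \<and> psum f t (Suc m) = psum f t n \<and> t m < b"
  using assms
proof (induction n)
  case 0 thus ?case unfolding part_def by auto
next
  case (Suc m)
  show ?case
  proof (cases "t m < b")
    case True thus ?thesis using Suc by blast
  next
    case False
    hence "t m = b" using Suc.prems unfolding part_def by force
    hence "part a b t m" "psum f t (Suc m) = psum f t m" using Suc.prems unfolding part_def psum_Suc by auto
    thus ?thesis using Suc.IH Suc.prems by auto
  qed
qed

lemma dedup_first:
  assumes "part a b t n" "a < b"
  shows "\<exists>s m. part a b s (Suc m) \<and> psum f s (Suc m) = psum f t n \<and> a < s 1"
  using assms
proof (induction n arbitrary: t)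
  case 0 thus ?case unfolding part_def by auto
next
  case (Suc m)
  show ?case
  proof (cases "a < t 1")
    case True thus ?thesis using Suc by auto
  next
    case False
    hence "t 1 = a" using Suc.prems unfolding part_def by force
    hence "part a b (\<lambda>i. t (Suc i)) m" "psum f t (Suc m) = psum f (\<lambda>i. t (Suc i)) m"
      using Suc.prems unfolding part_def psum_shift by auto
    thus ?thesis using Suc.IH Suc.prems by metis
  qed
qed

definition PS :: "(real \<Rightarrow> real) \<Rightarrow> real \<Rightarrow> real \<Rightarrow> real set" where
  "PS f a b = {psum f t n | t n. part a b t n}"

definition PV :: "(real \<Rightarrow> real) \<Rightarrow> real \<Rightarrow> real \<Rightarrow> real" where
  "PV f a b = Sup (PS f a b)"

context
  fixes f :: "real \<Rightarrow> real"
  assumes bv: "bounded_variation01 f"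
begin

lemma PS_bound: obtains M where "\<And>a b t n. 0 \<le> a \<Longrightarrow> b \<le> 1 \<Longrightarrow> part a b t n \<Longrightarrow> psum f t n \<le> M"
proof -
  obtain M where M: "\<forall>(n::nat) (t::nat \<Rightarrow> real). t 0 = 0 \<and> t n = 1 \<and> (\<forall>i<n. t i \<le> t (Suc i)) \<longrightarrow>
     (\<Sum>i<n. \<bar>f (t (Suc i)) - f (t i)\<bar>) \<le> M" using bv unfolding bounded_variation01_def by blast
  have "psum f t n \<le> M" if h: "0 \<le> a" "b \<le> 1" "part a b t n" for a b t n
  proof -
    have ab: "a \<le> b" using part_ab[OF h(3)] .
    have s0: "part 0 a (\<lambda>i. if i = 0 then 0 else a) 1" using h by (intro single_part) auto
    have s1: "part b 1 (\<lambda>i. if i = 0 then b else 1) 1" using h by (intro single_part) auto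
    define u where "u = cat (\<lambda>i. if i = 0 then 0 else a) 1 t"
    have pu: "part 0 b u (1 + n)" unfolding u_def by (rule cat_part[OF s0 h(3)])
    define w where "w = cat u (1 + n) (\<lambda>i. if i = 0 then b else 1)"
    have pw: "part 0 1 w (1 + n + 1)" unfolding w_def by (rule cat_part[OF pu s1])
    have "psum f w (1 + n + 1) = psum f u (1 + n) + \<bar>f 1 - f b\<bar>"
      unfolding w_def cat_psum[OF pu s1] single_psum ..
    also have "psum f u (1 + n) = \<bar>f a - f 0\<bar> + psum f t n"
      unfolding u_def cat_psum[OF s0 h(3)] single_psum by simp
    finally have "psum f t n \<le> psum f w (1 + n + 1)" by simp
    also have "\<dots> \<le> M" using M pw unfolding part_def psum_def by blast
    finally show ?thesis .
  qed
  thus ?thesis using that by blast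
qed

lemma PS_bdd: "0 \<le> a \<Longrightarrow> b \<le> 1 \<Longrightarrow> bdd_above (PS f a b)"
  using PS_bound unfolding PS_def bdd_above_def by (smt (verit) mem_Collect_eq)

lemma PS_ne: "a \<le> b \<Longrightarrow> PS f a b \<noteq> {}"
  unfolding PS_def using single_part[of a b] by blast

lemma PV_ge: "0 \<le> a \<Longrightarrow> b \<le> 1 \<Longrightarrow> part a b t n \<Longrightarrow> psum f t n \<le> PV f a b"
  unfolding PV_def using PS_bdd[of a b] by (intro cSup_upper) (auto simp: PS_def)

lemma PV_single: "0 \<le> a \<Longrightarrow> a \<le> b \<Longrightarrow> b \<le> 1 \<Longrightarrow> \<bar>f b - f a\<bar> \<le> PV f a b"
  using PV_ge[OF _ _ single_part[of a b]] single_psum by metis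

lemma PV_nonneg: "0 \<le> a \<Longrightarrow> a \<le> b \<Longrightarrow> b \<le> 1 \<Longrightarrow> 0 \<le> PV f a b"
  using PV_single by (meson abs_ge_zero order_trans)

lemma PV_least: "a \<le> b \<Longrightarrow> (\<And>t n. part a b t n \<Longrightarrow> psum f t n \<le> z) \<Longrightarrow> PV f a b \<le> z"
  unfolding PV_def using PS_ne[of a b] by (intro cSup_least) (auto simp: PS_def)

lemma PV_add:
  assumes "0 \<le> a" "a \<le> b" "b \<le> c" "c \<le> 1"
  shows "PV f a c = PV f a b + PV f b c"
proof (rule antisym)
  show "PV f a c \<le> PV f a b + PV f b c"
  proof (rule PV_least)
    show "a \<le> c" using assms by auto
    fix t n assume "part a c t n"
    then obtain t1 n1 t2 n2 where h: "part a b t1 n1" "part b c t2 n2" "psum f t n \<le> psum f t1 n1 + psum f t2 n2"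
      using split_part[of a c t n b f] assms by blast
    have "psum f t1 n1 \<le> PV f a b" "psum f t2 n2 \<le> PV f b c" using PV_ge h assms by auto
    thus "psum f t n \<le> PV f a b + PV f b c" using h by auto
  qed
next
  have "psum f t1 n1 \<le> PV f a c - PV f b c" if h1: "part a b t1 n1" for t1 n1
  proof -
    have "psum f t2 n2 \<le> PV f a c - psum f t1 n1" if h2: "part b c t2 n2" for t2 n2
    proof -
      have "psum f (cat t1 n1 t2) (n1 + n2) \<le> PV f a c"
        using PV_ge[OF _ _ cat_part[OF h1 h2]] assms by auto
      thus ?thesis unfolding cat_psum[OF h1 h2] by simp
    qed
    hence "PV f b c \<le> PV f a c - psum f t1 n1" using assms by (intro PV_least) auto
    thus ?thesis by simp
  qed
  hence "PV f a b \<le> PV f a c - PV f b c" using assms by (intro PV_least) auto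
  thus "PV f a b + PV f b c \<le> PV f a c" by simp
qed


lemma PV_left:
  assumes cont: "continuous_on {0..1} f" and ab: "0 \<le> a" "a < b" "b \<le> 1" and e: "e > 0"
  shows "\<exists>y. a \<le> y \<and> y < b \<and> PV f a b - e < PV f a y"
proof -
  have "PV f a b - e/2 < Sup (PS f a b)" using e unfolding PV_def by simp
  then obtain p where "p \<in> PS f a b" "PV f a b - e/2 < p"
    using less_cSup_iff[OF PS_ne PS_bdd] ab by (meson less_imp_le)
  then obtain t n where tn: "part a b t n" "PV f a b - e/2 < psum f t n" unfolding PS_def by blast
  obtain m where m: "part a b t (Suc m)" "psum f t (Suc m) = psum f t n" "t m < b"
    using dedup_last[OF tn(1) ab(2)] by blast
  have "b \<in> {0..1}" using ab by auto
  then obtain d where d: "d > 0" "\<forall>x'\<in>{0..1}. dist x' b < d \<longrightarrow> dist (f x') (f b) < e/2"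
    using cont e unfolding continuous_on_iff by (meson half_gt_zero)
  define y where "y = max (t m) (b - d/2)"
  have atm: "a \<le> t m" using part_le[OF m(1), of 0 m] m(1) unfolding part_def by auto
  have y: "a \<le> y" "y < b" "t m \<le> y" "b - y < d" using atm m(3) d(1) unfolding y_def by auto
  have "y \<in> {0..1}" "dist y b < d" using y ab by (auto simp: dist_real_def)
  hence fy: "\<bar>f b - f y\<bar> < e/2" using d by (auto simp: dist_real_def abs_minus_commute)
  have pm: "part a (t m) t m" using m(1) unfolding part_def by auto
  have sp: "part (t m) y (\<lambda>i. if i = 0 then t m else y) 1" using y by (intro single_part) auto
  have "psum f t (Suc m) = psum f t m + \<bar>f b - f (t m)\<bar>" using m(1) unfolding psum_Suc part_def by auto
  also have "\<dots> \<le> psum f t m + \<bar>f y - f (t m)\<bar> + \<bar>f b - f y\<bar>" by simp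
  also have "psum f t m + \<bar>f y - f (t m)\<bar> = psum f (cat t m (\<lambda>i. if i = 0 then t m else y)) (m + 1)"
    unfolding cat_psum[OF pm sp] single_psum ..
  also have "\<dots> \<le> PV f a y" using PV_ge[OF _ _ cat_part[OF pm sp]] ab y by auto
  finally show ?thesis using tn(2) m(2) fy y by (intro exI[of _ y]) auto
qed

lemma PV_right:
  assumes cont: "continuous_on {0..1} f" and ac: "0 \<le> a" "a < c" "c \<le> 1" and e: "e > 0"
  shows "\<exists>y. a < y \<and> y \<le> c \<and> PV f a c - e < PV f y c"
proof -
  have "PV f a c - e/2 < Sup (PS f a c)" using e unfolding PV_def by simp
  then obtain p where "p \<in> PS f a c" "PV f a c - e/2 < p"
    using less_cSup_iff[OF PS_ne PS_bdd] ac by (meson less_imp_le)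
  then obtain t n where tn: "part a c t n" "PV f a c - e/2 < psum f t n" unfolding PS_def by blast
  obtain s m where m: "part a c s (Suc m)" "psum f s (Suc m) = psum f t n" "a < s 1"
    using dedup_first[OF tn(1) ac(2)] by blast
  have "a \<in> {0..1}" using ac by auto
  then obtain d where d: "d > 0" "\<forall>x'\<in>{0..1}. dist x' a < d \<longrightarrow> dist (f x') (f a) < e/2"
    using cont e unfolding continuous_on_iff by (meson half_gt_zero)
  define y where "y = min (s 1) (a + d/2)"
  have s1c: "s 1 \<le> c" using part_le[OF m(1), of 1 "Suc m"] m(1) unfolding part_def by auto
  have y: "a < y" "y \<le> s 1" "y - a < d" using m(3) d(1) unfolding y_def by auto
  have fy: "\<bar>f y - f a\<bar> < e/2" using d y ac s1c by (auto simp: dist_real_def)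
  have pt: "part (s 1) c (\<lambda>i. s (Suc i)) m" using m(1) unfolding part_def by auto
  have sp: "part y (s 1) (\<lambda>i. if i = 0 then y else s 1) 1" using y by (intro single_part) auto
  have "psum f s (Suc m) = \<bar>f (s 1) - f a\<bar> + psum f (\<lambda>i. s (Suc i)) m"
    using m(1) unfolding psum_shift part_def by auto
  also have "\<dots> \<le> \<bar>f y - f a\<bar> + (\<bar>f (s 1) - f y\<bar> + psum f (\<lambda>i. s (Suc i)) m)" by simp
  also have "\<bar>f (s 1) - f y\<bar> + psum f (\<lambda>i. s (Suc i)) m = psum f (cat (\<lambda>i. if i = 0 then y else s 1) 1 (\<lambda>i. s (Suc i))) (1 + m)"
    unfolding cat_psum[OF sp pt] single_psum ..
  also have "\<dots> \<le> PV f y c" using PV_ge[OF _ _ cat_part[OF sp pt]] ac y by auto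
  finally show ?thesis using tn(2) m(2) fy y s1c by (intro exI[of _ y]) auto
qed


lemma V_cont:
  assumes cont: "continuous_on {0..1} f"
  shows "continuous_on {0..1} (\<lambda>x. PV f 0 x)"
  unfolding continuous_on_iff
proof (intro ballI allI impI)
  fix x0 e :: real assume x0: "x0 \<in> {0..1}" and e: "e > 0"
  obtain d1 where d1: "d1 > 0" "\<forall>x'. 0 \<le> x' \<longrightarrow> x' < x0 \<longrightarrow> x0 - x' < d1 \<longrightarrow> PV f 0 x0 - e < PV f 0 x'"
  proof (cases "x0 > 0")
    case True
    then obtain y where y: "0 \<le> y" "y < x0" "PV f 0 x0 - e < PV f 0 y"
      using PV_left[OF cont _ True _ e] x0 by auto
    have "PV f 0 x0 - e < PV f 0 x'" if "0 \<le> x'" "x' < x0" "x0 - x' < x0 - y" for x'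
    proof -
      have "PV f 0 x' = PV f 0 y + PV f y x'" using PV_add[of 0 y x'] that y x0 by auto
      moreover have "0 \<le> PV f y x'" using PV_nonneg that y x0 by auto
      ultimately show ?thesis using y by linarith
    qed
    thus ?thesis using that[of "x0 - y"] y by auto
  next
    case False
    thus ?thesis using that[of 1] by auto
  qed
  obtain d2 where d2: "d2 > 0" "\<forall>x'. x0 < x' \<longrightarrow> x' \<le> 1 \<longrightarrow> x' - x0 < d2 \<longrightarrow> PV f x0 x' < e"
  proof (cases "x0 < 1")
    case True
    then obtain y where y: "x0 < y" "y \<le> 1" "PV f x0 1 - e < PV f y 1"
      using PV_right[OF cont _ True _ e] x0 by auto
    have "PV f x0 x' < e" if "x0 < x'" "x' \<le> 1" "x' - x0 < y - x0" for x'
    proof -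
      have "PV f x0 1 = PV f x0 x' + PV f x' 1" using PV_add[of x0 x' 1] that x0 by auto
      moreover have "PV f x' 1 = PV f x' y + PV f y 1" using PV_add[of x' y 1] that x0 y by auto
      moreover have "0 \<le> PV f x' y" using PV_nonneg that y x0 by auto
      ultimately show ?thesis using y by linarith
    qed
    thus ?thesis using that[of "y - x0"] y by auto
  next
    case False
    thus ?thesis using that[of 1] x0 by auto
  qed
  show "\<exists>d>0. \<forall>x'\<in>{0..1}. dist x' x0 < d \<longrightarrow> dist (PV f 0 x') (PV f 0 x0) < e"
  proof (intro exI[of _ "min d1 d2"] conjI ballI impI)
    show "min d1 d2 > 0" using d1 d2 by auto
    fix x' assume x': "x' \<in> {0..1}" "dist x' x0 < min d1 d2"
    consider "x' < x0" | "x' = x0" | "x0 < x'" by linarith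
    thus "dist (PV f 0 x') (PV f 0 x0) < e"
    proof cases
      case 1
      have "PV f 0 x0 = PV f 0 x' + PV f x' x0" using PV_add[of 0 x' x0] 1 x' x0 by auto
      moreover have "0 \<le> PV f x' x0" using PV_nonneg 1 x' x0 by auto
      moreover have "PV f 0 x0 - e < PV f 0 x'" using d1 1 x' by (auto simp: dist_real_def)
      ultimately show ?thesis by (auto simp: dist_real_def)
    next
      case 2 thus ?thesis using e by auto
    next
      case 3
      have "PV f 0 x' = PV f 0 x0 + PV f x0 x'" using PV_add[of 0 x0 x'] 3 x' x0 by auto
      moreover have "0 \<le> PV f x0 x'" using PV_nonneg 3 x' x0 by auto
      moreover have "PV f x0 x' < e" using d2 3 x' by (auto simp: dist_real_def)
      ultimately show ?thesis by (auto simp: dist_real_def)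
    qed
  qed
qed

end

lemma mono_graph:
  fixes g :: "real \<Rightarrow> real"
  assumes m: "\<And>x y z. 0 \<le> x \<Longrightarrow> x \<le> y \<Longrightarrow> y \<le> z \<Longrightarrow> z \<le> 1 \<Longrightarrow> \<bar>g y - g x\<bar> \<le> \<bar>g z - g x\<bar>"
  shows "c_monotone 1 (graph01 g)"
proof -
  define G where "G = graph01 g"
  have Gc: "p \<in> G \<longleftrightarrow> 0 \<le> fst p \<and> fst p \<le> 1 \<and> snd p = g (fst p)" for p
    unfolding G_def graph01_def by (cases p) auto
  define R where "R = {(p, q). p \<in> G \<and> q \<in> G \<and> fst p \<le> fst q}"
  have lo: "linear_order_on G R"
    unfolding linear_order_on_def partial_order_on_def preorder_on_def refl_on_def trans_def antisym_def total_on_def R_def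
    using Gc by (auto simp: prod_eq_iff)
  have pr: "\<forall>x\<in>G. \<forall>y\<in>G. \<forall>z\<in>G. (x,y) \<in> R \<and> x \<noteq> y \<and> (y,z) \<in> R \<and> y \<noteq> z \<longrightarrow> dist x y \<le> 1 * dist x z"
  proof (intro ballI impI)
    fix x y z assume xyz: "x \<in> G" "y \<in> G" "z \<in> G" and h: "(x,y) \<in> R \<and> x \<noteq> y \<and> (y,z) \<in> R \<and> y \<noteq> z"
    obtain s t u where st: "x = (s, g s)" "y = (t, g t)" "z = (u, g u)" "0 \<le> s" "s \<le> t" "t \<le> u" "u \<le> 1"
      using xyz h Gc unfolding R_def by (metis (no_types, lifting) case_prodD mem_Collect_eq prod.collapse)
    have "\<bar>g t - g s\<bar> \<le> \<bar>g u - g s\<bar>" using m st by auto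
    hence a: "(g t - g s)^2 \<le> (g u - g s)^2" using abs_le_square_iff by blast
    have b: "(t - s)^2 \<le> (u - s)^2" using st by (intro power_mono) auto
    have "sqrt ((t - s)^2 + (g t - g s)^2) \<le> sqrt ((u - s)^2 + (g u - g s)^2)"
      using a b by (intro real_sqrt_le_mono) auto
    thus "dist x y \<le> 1 * dist x z" unfolding st by (simp add: dist_Pair_Pair dist_real_def power2_commute)
  qed
  show ?thesis unfolding c_monotone_def G_def[symmetric] by (intro conjI exI[of _ R]) (use lo pr in auto)
qed

lemma bv_add:
  assumes "bounded_variation01 g" "bounded_variation01 h" "\<forall>x\<in>{0..1}. f x = g x + h x"
  shows "bounded_variation01 f"
proof -
  obtain M1 where M1: "\<forall>(n::nat) (t::nat \<Rightarrow> real). t 0 = 0 \<and> t n = 1 \<and> (\<forall>i<n. t i \<le> t (Suc i)) \<longrightarrow>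
     (\<Sum>i<n. \<bar>g (t (Suc i)) - g (t i)\<bar>) \<le> M1" using assms(1) unfolding bounded_variation01_def by blast
  obtain M2 where M2: "\<forall>(n::nat) (t::nat \<Rightarrow> real). t 0 = 0 \<and> t n = 1 \<and> (\<forall>i<n. t i \<le> t (Suc i)) \<longrightarrow>
     (\<Sum>i<n. \<bar>h (t (Suc i)) - h (t i)\<bar>) \<le> M2" using assms(2) unfolding bounded_variation01_def by blast
  show ?thesis unfolding bounded_variation01_def
  proof (intro exI[of _ "M1 + M2"] allI impI)
    fix n and t :: "nat \<Rightarrow> real" assume p: "t 0 = 0 \<and> t n = 1 \<and> (\<forall>i<n. t i \<le> t (Suc i))"
    have tr: "t i \<in> {0..1}" if "i \<le> n" for i using part_range[of t n i] p that by auto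
    have "(\<Sum>i<n. \<bar>f (t (Suc i)) - f (t i)\<bar>) \<le> (\<Sum>i<n. \<bar>g (t (Suc i)) - g (t i)\<bar> + \<bar>h (t (Suc i)) - h (t i)\<bar>)"
    proof (intro sum_mono)
      fix i assume "i \<in> {..<n}"
      hence "f (t (Suc i)) = g (t (Suc i)) + h (t (Suc i))" "f (t i) = g (t i) + h (t i)" using tr assms(3) by auto
      thus "\<bar>f (t (Suc i)) - f (t i)\<bar> \<le> \<bar>g (t (Suc i)) - g (t i)\<bar> + \<bar>h (t (Suc i)) - h (t i)\<bar>" by simp
    qed
    also have "\<dots> \<le> M1 + M2" using M1 M2 p by (simp add: sum.distrib add_mono)
    finally show "(\<Sum>i<n. \<bar>f (t (Suc i)) - f (t i)\<bar>) \<le> M1 + M2" .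
  qed
qed

theorem corollary6p6:
  fixes f :: "real \<Rightarrow> real"
  assumes "continuous_on {0..1} f"
  shows "bounded_variation01 f \<longleftrightarrow>
    (\<exists>g h. continuous_on {0..1} g \<and> continuous_on {0..1} h \<and>
       (\<forall>x\<in>{0..1}. f x = g x + h x) \<and>
       c_monotone 1 (graph01 g) \<and> c_monotone 1 (graph01 h))"
proof
  assume bv: "bounded_variation01 f"
  define g where "g x = (PV f 0 x + f x) / 2" for x
  define h where "h x = (f x - PV f 0 x) / 2" for x
  have Vs: "PV f 0 x + \<bar>f y - f x\<bar> \<le> PV f 0 y" if "0 \<le> x" "x \<le> y" "y \<le> 1" for x y
    using PV_add[OF bv, of 0 x y] PV_single[OF bv, of x y] that by auto
  have "continuous_on {0..1} g" unfolding g_def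
    by (intro continuous_intros V_cont[OF bv assms] assms) auto
  moreover have "continuous_on {0..1} h" unfolding h_def
    by (intro continuous_intros V_cont[OF bv assms] assms) auto
  moreover have "\<forall>x\<in>{0..1}. f x = g x + h x" unfolding g_def h_def by (auto simp: field_simps)
  moreover have "c_monotone 1 (graph01 g)"
  proof (rule mono_graph)
    fix x y z :: real assume "0 \<le> x" "x \<le> y" "y \<le> z" "z \<le> 1"
    hence "PV f 0 x + \<bar>f y - f x\<bar> \<le> PV f 0 y" "PV f 0 y + \<bar>f z - f y\<bar> \<le> PV f 0 z" using Vs by auto
    hence "g x \<le> g y" "g y \<le> g z" unfolding g_def by auto
    thus "\<bar>g y - g x\<bar> \<le> \<bar>g z - g x\<bar>" by auto
  qed
  moreover have "c_monotone 1 (graph01 h)"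
  proof (rule mono_graph)
    fix x y z :: real assume "0 \<le> x" "x \<le> y" "y \<le> z" "z \<le> 1"
    hence "PV f 0 x + \<bar>f y - f x\<bar> \<le> PV f 0 y" "PV f 0 y + \<bar>f z - f y\<bar> \<le> PV f 0 z" using Vs by auto
    hence "h y \<le> h x" "h z \<le> h y" unfolding h_def by auto
    thus "\<bar>h y - h x\<bar> \<le> \<bar>h z - h x\<bar>" by auto
  qed
  ultimately show "\<exists>g h. continuous_on {0..1} g \<and> continuous_on {0..1} h \<and>
       (\<forall>x\<in>{0..1}. f x = g x + h x) \<and> c_monotone 1 (graph01 g) \<and> c_monotone 1 (graph01 h)" by blast
next
  assume "\<exists>g h. continuous_on {0..1} g \<and> continuous_on {0..1} h \<and>
       (\<forall>x\<in>{0..1}. f x = g x + h x) \<and> c_monotone 1 (graph01 g) \<and> c_monotone 1 (graph01 h)"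
  then obtain g h where gh: "continuous_on {0..1} g" "continuous_on {0..1} h" "\<forall>x\<in>{0..1}. f x = g x + h x"
    "c_monotone 1 (graph01 g)" "c_monotone 1 (graph01 h)" by blast
  show "bounded_variation01 f" using bv_add[OF graph_bv[OF gh(1,4)] graph_bv[OF gh(2,5)] gh(3)] .
qed

end
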